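(* Let $d\ge 1$, $G\in\mathrm{GL}_{1+d}(\mathbb{R})$, $\gamma\in\mathbb{R}^{1+d}$, $\mathcal{G}(\tilde X)=G\tilde X+\gamma$, and let $(x_A,\xi_A)\in\mathbb{R}^d\times\mathbb{R}^d$ with $\|\xi_A\|<1$ and $\sigma(\xi_A)\notin G\mathcal{P}_0$. Let $(x_B,\xi_B)=\kappa_{U_{\mathcal{G}}}(x_A,\xi_A)$, where $\kappa_{U_{\mathcal{G}}}(x,\xi)=\big(({}^tdg(\xi))^{-1}(x-dS(\xi)),\ g(\xi)\big)$ with $g(\xi)=\boldsymbol{\pi}({}^tG\sigma(\xi))$ and $S(\xi)=\langle\gamma,\sigma(\xi)\rangle$. Let ${}^t\boldsymbol{\pi}:\mathbb{R}^d\to\mathbb{R}^{1+d}$, ${}^t\boldsymbol{\pi}(x)=(0,x)$, and set $A={}^t\boldsymbol{\pi}x_A$ and $B=\mathcal{G}({}^t\boldsymbol{\pi}x_B)$. Then $B-A$ is collinear to $\sigma(\xi_A)$.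
   Context: $\mathbb{R}^{1+d}$ with canonical basis $e_0,\dots,e_d$, Euclidean scalar product $\langle\cdot,\cdot\rangle$; $\boldsymbol{\pi}:\mathbb{R}^{1+d}\to\mathbb{R}^d$ drops the first coordinate; $\sigma(\xi)=(\sqrt{1-\|\xi\|^2},\xi)$ for $\|\xi\|<1$; $\mathcal{P}_0=\{\xi_0=0\}\subset\mathbb{R}^{1+d}$; ${}^t$ denotes transpose. The map $\kappa_{U_{\mathcal{G}}}$ is the (local) canonical transformation associated with the rotated angular spectrum propagator $U_{\mathcal{G}}$; under the assumption $\sigma(\xi_A)\notin G\mathcal{P}_0$, $dg(\xi_A)$ is invertible. *)

theory Defs
  imports "HOL-Analysis.Analysis"
begin

text \<open>R^{1+d} is modelled as real ^ (unit + 'n), where R^d = real ^ 'n;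
  the index Inl () is the coordinate 0 and Inr j are the coordinates 1..d.\<close>

definition pi_proj :: "real ^ (unit + 'n::finite) \<Rightarrow> real ^ 'n" where
  "pi_proj X = (\<chi> j. X $ Inr j)"

definition pi_transp :: "real ^ 'n::finite \<Rightarrow> real ^ (unit + 'n)" where
  "pi_transp x = (\<chi> i. case i of Inl _ \<Rightarrow> 0 | Inr j \<Rightarrow> x $ j)"

definition sigma :: "real ^ 'n::finite \<Rightarrow> real ^ (unit + 'n)" where
  "sigma \<xi> = (\<chi> i. case i of Inl _ \<Rightarrow> sqrt (1 - (norm \<xi>)\<^sup>2) | Inr j \<Rightarrow> \<xi> $ j)"

definition P0 :: "(real ^ (unit + 'n::finite)) set" where
  "P0 = {X. X $ Inl () = 0}"

definition g_map :: "real ^ (unit + 'n) ^ (unit + 'n::finite) \<Rightarrow> real ^ 'n \<Rightarrow> real ^ 'n" where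
  "g_map G \<xi> = pi_proj (transpose G *v sigma \<xi>)"

definition S_map :: "real ^ (unit + 'n::finite) \<Rightarrow> real ^ 'n \<Rightarrow> real" where
  "S_map \<gamma> \<xi> = \<gamma> \<bullet> sigma \<xi>"

definition dg :: "real ^ (unit + 'n) ^ (unit + 'n::finite) \<Rightarrow> real ^ 'n \<Rightarrow> real ^ 'n ^ 'n" where
  "dg G \<xi> = matrix (frechet_derivative (g_map G) (at \<xi>))"

definition dS :: "real ^ (unit + 'n::finite) \<Rightarrow> real ^ 'n \<Rightarrow> real ^ 'n" where
  "dS \<gamma> \<xi> = (\<chi> j. frechet_derivative (S_map \<gamma>) (at \<xi>) (axis j 1))"

definition kappa :: "real ^ (unit + 'n) ^ (unit + 'n::finite) \<Rightarrow> real ^ (unit + 'n)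
    \<Rightarrow> (real ^ 'n) \<times> (real ^ 'n) \<Rightarrow> (real ^ 'n) \<times> (real ^ 'n)" where
  "kappa G \<gamma> p =
     (matrix_inv (transpose (dg G (snd p))) *v (fst p - dS \<gamma> (snd p)), g_map G (snd p))"

definition affG :: "real ^ (unit + 'n) ^ (unit + 'n::finite) \<Rightarrow> real ^ (unit + 'n)
    \<Rightarrow> real ^ (unit + 'n) \<Rightarrow> real ^ (unit + 'n)" where
  "affG G \<gamma> X = G *v X + \<gamma>"

end

theory Submission imports Defs begin
definition e0 :: "real ^ (unit + 'n::finite)" where "e0 = axis (Inl ()) 1"

lemma sigma_alt: "sigma \<xi> = sqrt (1 - (norm \<xi>)\<^sup>2) *\<^sub>R e0 + pi_transp \<xi>"
  by (auto simp: sigma_def e0_def pi_transp_def axis_def vec_eq_iff split: sum.splits)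

lemma lin_pt: "bounded_linear (pi_transp :: real^'n::finite \<Rightarrow> _)"
  apply (rule bounded_linearI')
  by (auto simp: pi_transp_def vec_eq_iff split: sum.splits)

lemma lin_pp: "bounded_linear (pi_proj :: real^(unit+'n::finite) \<Rightarrow> _)"
  apply (rule bounded_linearI')
  by (auto simp: pi_proj_def vec_eq_iff)

lemma sq_pos: "norm (\<xi>::real^'n::finite) < 1 \<Longrightarrow> 0 < 1 - (norm \<xi>)\<^sup>2"
  by (simp add: abs_square_less_1)

lemma sq_der:
  fixes \<xi> :: "real^'n::finite"
  assumes "norm \<xi> < 1"
  shows "((\<lambda>x. sqrt (1 - (norm x)\<^sup>2)) has_derivative (\<lambda>h. - (\<xi> \<bullet> h) / sqrt (1 - (norm \<xi>)\<^sup>2))) (at \<xi>)"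
proof -
  have p: "0 < 1 - (norm \<xi>)\<^sup>2" using assms by (rule sq_pos)
  have e: "\<And>x::real^'n. (norm x)\<^sup>2 = x \<bullet> x" by (simp add: power2_norm_eq_inner)
  have "((\<lambda>x::real^'n. sqrt (1 - x \<bullet> x)) has_derivative (\<lambda>h. inverse (sqrt (1 - \<xi> \<bullet> \<xi>)) / 2 * (- (\<xi> \<bullet> h + h \<bullet> \<xi>)))) (at \<xi>)"
    using p by (auto intro!: derivative_eq_intros simp: e)
  then show ?thesis unfolding e
    by (rule has_derivative_eq_rhs) (auto simp: inner_commute field_simps)
qed

definition Dsig :: "real^'n::finite \<Rightarrow> real^'n \<Rightarrow> real^(unit+'n)" where
  "Dsig \<xi> h = (- (\<xi> \<bullet> h) / sqrt (1 - (norm \<xi>)\<^sup>2)) *\<^sub>R e0 + pi_transp h"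

lemma lin_Dsig: "bounded_linear (Dsig \<xi>)"
  unfolding Dsig_def
  unfolding linear_conv_bounded_linear[symmetric]
  apply (rule linearI)
  by (auto simp: Dsig_def vec_eq_iff pi_transp_def e0_def axis_def inner_add_right add_divide_distrib diff_divide_distrib algebra_simps split: sum.splits)

lemma sigma_der:
  assumes "norm \<xi> < 1"
  shows "(sigma has_derivative Dsig \<xi>) (at \<xi>)"
proof -
  have "((\<lambda>x. sqrt (1 - (norm x)\<^sup>2) *\<^sub>R e0 + pi_transp x) has_derivative Dsig \<xi>) (at \<xi>)"
    unfolding Dsig_def
    by (intro has_derivative_add has_derivative_scaleR_left sq_der[OF assms]
        bounded_linear.has_derivative[OF lin_pt] has_derivative_ident)
  then show ?thesis unfolding sigma_alt[abs_def] .
qed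

lemma inner_split: "(X::real^(unit+'n::finite)) \<bullet> Y = X $ Inl () * Y $ Inl () + pi_proj X \<bullet> pi_proj Y"
proof -
  have "X \<bullet> Y = (\<Sum>i\<in>Inl ` UNIV \<union> Inr ` UNIV. X $ i * Y $ i)"
    unfolding inner_vec_def UNIV_sum by simp
  also have "\<dots> = (\<Sum>i\<in>Inl ` (UNIV::unit set). X $ i * Y $ i) + (\<Sum>i\<in>Inr ` (UNIV::'n set). X $ i * Y $ i)"
    by (rule sum.union_disjoint) auto
  also have "\<dots> = X $ Inl () * Y $ Inl () + pi_proj X \<bullet> pi_proj Y"
    by (simp add: sum.reindex inner_vec_def pi_proj_def UNIV_unit)
  finally show ?thesis .
qed

lemma pp_pt[simp]: "pi_proj (pi_transp x) = x"
  by (simp add: pi_proj_def pi_transp_def vec_eq_iff)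
lemma pp_e0[simp]: "pi_proj e0 = 0"
  by (simp add: pi_proj_def e0_def vec_eq_iff axis_def)
lemma pt_0[simp]: "pi_transp x $ Inl u = 0"
  by (simp add: pi_transp_def)
lemma e0_0[simp]: "e0 $ Inl u = 1"
  by (simp add: e0_def axis_def)
lemma pp_sigma[simp]: "pi_proj (sigma x) = x"
  by (simp add: pi_proj_def sigma_def vec_eq_iff)
lemma sigma_0[simp]: "sigma x $ Inl u = sqrt (1 - (norm x)\<^sup>2)"
  by (simp add: sigma_def)
lemma Dsig_0: "Dsig \<xi> h $ Inl u = - (\<xi> \<bullet> h) / sqrt (1 - (norm \<xi>)\<^sup>2)"
  by (simp add: Dsig_def)
lemma pp_Dsig[simp]: "pi_proj (Dsig \<xi> h) = h"
  by (simp add: Dsig_def pi_proj_def vec_eq_iff e0_def axis_def pi_transp_def)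

lemma pp_zero[simp]: "pi_proj 0 = 0"
  by (simp add: pi_proj_def vec_eq_iff)

lemma vec_split: "(X::real^(unit+'n::finite)) = Y \<longleftrightarrow> X $ Inl () = Y $ Inl () \<and> pi_proj X = pi_proj Y"
  apply (auto simp: vec_eq_iff pi_proj_def)
  by (metis (full_types) old.unit.exhaust sumE)

lemma minv: "invertible A \<Longrightarrow> A ** matrix_inv A = mat 1 \<and> matrix_inv A ** A = mat 1"
  unfolding matrix_inv_def invertible_def by (rule someI_ex)

lemma inner_proj: "x \<bullet> pi_proj Y = pi_transp x \<bullet> Y"
  by (simp add: inner_split)

lemma inner_mat: "(G *v X) \<bullet> (Y::real^'m::finite) = X \<bullet> (transpose G *v Y)"
  by (metis dot_lmul_matrix inner_commute transpose_matrix_vector)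
lemma lin_gL: "bounded_linear (\<lambda>h. pi_proj (transpose G *v Dsig \<xi> h))"
  by (intro bounded_linear_compose[OF lin_pp] bounded_linear_compose[OF matrix_vector_mul_bounded_linear] lin_Dsig)

lemma dg_eq:
  assumes "norm \<xi> < 1"
  shows "dg G \<xi> = matrix (\<lambda>h. pi_proj (transpose G *v Dsig \<xi> h))"
proof -
  have "(g_map G has_derivative (\<lambda>h. pi_proj (transpose G *v Dsig \<xi> h))) (at \<xi>)"
    unfolding g_map_def[abs_def]
    by (intro bounded_linear.has_derivative[OF lin_pp] bounded_linear.has_derivative[OF matrix_vector_mul_bounded_linear]
        sigma_der[OF assms])
  then show ?thesis unfolding dg_def by (metis frechet_derivative_at)
qed

lemma dg_mult:
  assumes "norm \<xi> < 1"
  shows "dg G \<xi> *v h = pi_proj (transpose G *v Dsig \<xi> h)"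
  unfolding dg_eq[OF assms] by (rule matrix_works[OF linear_matrix_vector_mul_eq[THEN iffD2, OF bounded_linear.linear[OF lin_gL]]])

lemma dS_eq:
  assumes "norm \<xi> < 1"
  shows "dS \<gamma> \<xi> \<bullet> h = \<gamma> \<bullet> Dsig \<xi> h"
proof -
  have "(S_map \<gamma> has_derivative (\<lambda>h. \<gamma> \<bullet> Dsig \<xi> h)) (at \<xi>)"
    unfolding S_map_def[abs_def]
    by (intro bounded_linear.has_derivative[OF bounded_linear_inner_right] sigma_der[OF assms])
  then have fd: "frechet_derivative (S_map \<gamma>) (at \<xi>) = (\<lambda>h. \<gamma> \<bullet> Dsig \<xi> h)"
    by (metis frechet_derivative_at)
  have lin: "linear (\<lambda>h. \<gamma> \<bullet> Dsig \<xi> h)"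
    by (intro bounded_linear.linear bounded_linear_compose[OF bounded_linear_inner_right] lin_Dsig)
  have "\<gamma> \<bullet> Dsig \<xi> h = \<gamma> \<bullet> Dsig \<xi> (\<Sum>j\<in>UNIV. h $ j *\<^sub>R axis j 1)"
    using basis_expansion[of h] by (simp add: scalar_mult_eq_scaleR) 
  also have "\<dots> = (\<Sum>j\<in>UNIV. h $ j * (\<gamma> \<bullet> Dsig \<xi> (axis j 1)))"
    by (simp only: linear_sum[OF lin] linear_scale[OF lin] real_scaleR_def)
  also have "\<dots> = dS \<gamma> \<xi> \<bullet> h"
    unfolding dS_def fd by (simp add: inner_vec_def mult.commute)
  finally show ?thesis by simp
qed

lemma Dsig_sigma:
  assumes "norm \<xi> < 1"
  shows "Dsig \<xi> h \<bullet> sigma \<xi> = 0"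
  using sq_pos[OF assms] by (simp add: inner_split Dsig_0 inner_commute)

lemma dg_inv:
  fixes G :: "real ^ (unit + 'n::finite) ^ (unit + 'n)"
  assumes G: "invertible G" and n: "norm \<xi> < 1"
    and ns: "sigma \<xi> \<notin> (\<lambda>X. G *v X) ` P0"
  shows "invertible (dg G \<xi>)"
proof -
  have "\<forall>h. dg G \<xi> *v h = 0 \<longrightarrow> h = 0"
  proof (intro allI impI)
    fix h assume h0: "dg G \<xi> *v h = 0"
    define u where "u = Dsig \<xi> h"
    define Y where "Y = transpose G *v u"
    have pY: "pi_proj Y = 0" using h0 by (simp add: dg_mult[OF n] Y_def u_def)
    define X where "X = matrix_inv G *v sigma \<xi>"
    have GX: "G *v X = sigma \<xi>"
      using minv[OF G] by (simp add: X_def matrix_vector_mul_assoc)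
    have "Y \<bullet> X = u \<bullet> sigma \<xi>"
      by (metis GX Y_def inner_commute inner_mat)
    also have "\<dots> = 0" using Dsig_sigma[OF n] u_def by simp
    finally have "Y $ Inl () * X $ Inl () = 0" using pY by (simp add: inner_split)
    moreover have "X $ Inl () \<noteq> 0"
    proof
      assume "X $ Inl () = 0"
      then have "X \<in> P0" by (simp add: P0_def)
      then show False using ns GX by (metis image_eqI)
    qed
    ultimately have "Y $ Inl () = 0" by simp
    then have "Y = 0" using pY by (simp add: vec_split)
    moreover have "invertible (transpose G)" by (rule transpose_invertible[OF G])
    ultimately have "u = 0" unfolding Y_def
      by (metis invertible_left_inverse matrix_left_invertible_ker)
    then show "h = 0" by (metis u_def pp_Dsig lin_pp bounded_linear.linear linear_0)
  qed
  then show ?thesis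
    by (metis invertible_left_inverse matrix_left_invertible_ker)
qed

theorem lemma5p8:
  fixes G :: "real ^ (unit + 'n::finite) ^ (unit + 'n)"
    and \<gamma> :: "real ^ (unit + 'n)"
    and xA \<xi>A xB \<xi>B :: "real ^ 'n"
  assumes "invertible G"
    and "norm \<xi>A < 1"
    and "sigma \<xi>A \<notin> (\<lambda>X. G *v X) ` P0"
    and "(xB, \<xi>B) = kappa G \<gamma> (xA, \<xi>A)"
  shows "\<exists>c::real. affG G \<gamma> (pi_transp xB) - pi_transp xA = c *\<^sub>R sigma \<xi>A"
proof -
  note n = assms(2)
  define M where "M = dg G \<xi>A"
  define v where "v = xA - dS \<gamma> \<xi>A"
  have xB: "xB = matrix_inv (transpose M) *v v"
    using assms(4) by (simp add: kappa_def M_def v_def)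
  have Mi: "invertible (transpose M)"
    unfolding M_def by (intro transpose_invertible dg_inv assms)
  have TxB: "transpose M *v xB = v"
    using minv[OF Mi] by (simp add: xB matrix_vector_mul_assoc)
  define W where "W = affG G \<gamma> (pi_transp xB) - pi_transp xA"
  define s where "s = sqrt (1 - (norm \<xi>A)\<^sup>2)"
  have s0: "s > 0" using sq_pos[OF n] by (simp add: s_def)
  have key: "W \<bullet> Dsig \<xi>A h = 0" for h
  proof -
    have "v \<bullet> h = xB \<bullet> (M *v h)"
      by (metis TxB dot_lmul_matrix transpose_matrix_vector)
    also have "\<dots> = (G *v pi_transp xB) \<bullet> Dsig \<xi>A h"
      by (simp add: M_def dg_mult[OF n] inner_proj inner_mat)
    finally have 1: "v \<bullet> h = (G *v pi_transp xB) \<bullet> Dsig \<xi>A h" .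
    have 2: "xA \<bullet> h = pi_transp xA \<bullet> Dsig \<xi>A h" by (simp add: inner_split)
    have 3: "v \<bullet> h = xA \<bullet> h - \<gamma> \<bullet> Dsig \<xi>A h"
      by (simp add: v_def inner_diff_left dS_eq[OF n])
    show ?thesis using 1 2 3
      by (simp add: W_def affG_def inner_diff_left inner_add_left)
  qed
  define w where "w = pi_proj W - (W $ Inl () / s) *\<^sub>R \<xi>A"
  have "W \<bullet> Dsig \<xi>A w = w \<bullet> w"
    using s0 by (simp add: inner_split Dsig_0 w_def s_def[symmetric] inner_diff_left inner_diff_right
        algebra_simps inner_commute) (simp add: field_simps)
  then have "w = 0" using key by simp
  then have "W = (W $ Inl () / s) *\<^sub>R sigma \<xi>A"
    using s0 by (simp add: vec_split w_def s_def[symmetric] linear_scale[OF bounded_linear.linear[OF lin_pp]])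
  then show ?thesis unfolding W_def by blast
qed
end
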